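(* Let $g\ge1$ be an integer, $A\ge1$ real, $\mathbf n\ge\mathbf 1_g$ in $\mathbb N^g$, and $f=\sum_{\mathbf k\ge\mathbf 0_g}f_{\mathbf k}\mathbf z^{\mathbf k}$ a power series of order of magnitude $(A,\mathbf n)$. Let $\mathbf c\in P(\mathbf 0_g,1)$ and let $F_{\mathbf c}(\mathbf y)=f(\mathbf c+\mathbf y\star(\mathbf 1_g-\|\mathbf c\|))$ be the series recentered at $\mathbf c$. Then $F_{\mathbf c}$ is a power series of order of magnitude $(A_{\mathbf c},\mathbf n+\mathbf 1_g)$ with $A_{\mathbf c}=\mathbf n!\,A\,\exp(g+|\mathbf n|_1)\,2^{g+|\mathbf n|_1}(\mathbf 1_g-\|\mathbf c\|)^{-\mathbf n-\mathbf 2_g}$.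
   Context: For $\mathbf x=(x_1,\dots,x_g)\in\mathbb C^g$: $|\mathbf x|_1=\sum|x_k|$, $\|\mathbf x\|=(|x_1|,\dots,|x_g|)$; $\mathbf x\star\mathbf y=(x_1y_1,\dots,x_gy_g)$; $\mathbf 0_g,\mathbf 1_g,\mathbf 2_g$ are the constant vectors; inequalities between vectors are componentwise; multi-index notation: $\mathbf x^{\mathbf k}=\prod x_m^{k_m}$, $\mathbf n!=\prod n_m!$. $P(\mathbf x,r)=\prod_kD(x_k,r)$ is the open polydisc. A series $f=\sum_{\mathbf k}f_{\mathbf k}\mathbf z^{\mathbf k}$ has order of magnitude $(A,\mathbf n)$ ($A\ge1$, $\mathbf n\ge\mathbf 1_g$) if $|f_{\mathbf k}|\le A(\mathbf k+\mathbf 1_g)^{\mathbf n}=A\prod_m(k_m+1)^{n_m}$ for all $\mathbf k$. *)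

theory Defs
  imports "HOL-Analysis.Analysis"
begin

text \<open>Multi-indices are vectors in nat ^ 'g, points are vectors in complex ^ 'g;
  the dimension g is CARD('g) (always \<ge> 1).\<close>

definition mpow :: "complex ^ 'g \<Rightarrow> nat ^ 'g \<Rightarrow> complex" where
  "mpow z k = (\<Prod>m\<in>UNIV. (z $ m) ^ (k $ m))"

definition l1norm_nat :: "nat ^ 'g \<Rightarrow> nat" where
  "l1norm_nat n = (\<Sum>m\<in>UNIV. n $ m)"

definition mfact :: "nat ^ 'g \<Rightarrow> real" where
  "mfact n = (\<Prod>m\<in>UNIV. fact (n $ m))"

definition in_polydisc :: "complex ^ 'g \<Rightarrow> complex ^ 'g \<Rightarrow> real \<Rightarrow> bool" where
  "in_polydisc z x r \<longleftrightarrow> (\<forall>m. dist (z $ m) (x $ m) < r)"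

definition order_of_magnitude :: "(nat ^ 'g \<Rightarrow> complex) \<Rightarrow> real \<Rightarrow> nat ^ 'g \<Rightarrow> bool" where
  "order_of_magnitude f A n \<longleftrightarrow> A \<ge> 1 \<and> (\<forall>m. n $ m \<ge> 1) \<and>
     (\<forall>k. norm (f k) \<le> A * (\<Prod>m\<in>UNIV. (real (k $ m) + 1) ^ (n $ m)))"

definition ps_eval :: "(nat ^ 'g \<Rightarrow> complex) \<Rightarrow> complex ^ 'g \<Rightarrow> complex" where
  "ps_eval f z = infsum (\<lambda>k. f k * mpow z k) UNIV"

end

theory Submission
  imports Defs
begin

lemma negbin_sums:
  fixes s :: real and M :: nat
  assumes "0 \<le> s" "s < 1"
  shows "(\<lambda>l. real ((l + M) choose M) * s ^ l) sums (1 / (1 - s) ^ (M + 1))"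
proof -
  have "\<bar>-s\<bar> < 1" using assms by simp
  from gen_binomial_real[OF this, of "- real (M + 1)"]
  have "(\<lambda>l. (- real (M + 1) gchoose l) * (- s) ^ l) sums (1 + - s) powr (- real (M + 1))" .
  also have "(\<lambda>l. (- real (M + 1) gchoose l) * (- s) ^ l) = (\<lambda>l. real ((l + M) choose M) * s ^ l)"
  proof
    fix l
    have "(- real (M + 1) gchoose l) = (-1) ^ l * ((real (M + 1) + of_nat l - 1) gchoose l)"
      by (rule gbinomial_minus)
    also have "real (M + 1) + of_nat l - 1 = real (M + l)" by simp
    also have "(real (M + l) gchoose l) = real ((M + l) choose l)"
      by (simp add: binomial_gbinomial)
    also have "(M + l) choose l = (l + M) choose M"
      by (metis add.commute binomial_symmetric le_add2 add_diff_cancel_left')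
    finally have e: "(- real (M + 1) gchoose l) = (-1) ^ l * real ((l + M) choose M)" .
    have "(- s) ^ l = (-1) ^ l * s ^ l" by (rule power_minus)
    moreover have "((-1::real) ^ l) * (-1) ^ l = 1"
      by (metis power_mult_distrib mult_minus1 power_one minus_minus)
    ultimately show "(- real (M + 1) gchoose l) * (- s) ^ l = real ((l + M) choose M) * s ^ l"
      unfolding e by (metis (no_types, lifting) mult.assoc mult.commute mult.left_commute mult_1)
  qed
  also have "(1 + - s) powr (- real (M + 1)) = 1 / (1 - s) ^ (M + 1)"
  proof -
    have "(1 - s) powr (- real (M + 1)) = 1 / (1 - s) powr (real (M + 1))"
      by (rule powr_minus_divide)
    also have "(1 - s) powr (real (M + 1)) = (1 - s) ^ (M + 1)"
      using assms by (intro powr_realpow) simp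
    finally show ?thesis by simp
  qed
  finally show ?thesis .
qed

lemma pow_le_fact_choose: "(i + 1) ^ n \<le> fact n * ((i + n) choose n)"
proof (induction n)
  case 0
  then show ?case by simp
next
  case (Suc n)
  have "(i + 1) ^ Suc n = (i + 1) * (i + 1) ^ n" by simp
  also have "\<dots> \<le> (i + 1) * (fact n * ((i + n) choose n))"
    using Suc by (intro mult_le_mono2)
  also have "\<dots> \<le> Suc (i + n) * (fact n * ((i + n) choose n))"
    by (intro mult_le_mono1) (simp only: Suc_eq_plus1 add_le_mono le_add1 order_refl)
  also have "\<dots> = fact n * (Suc (i + n) * ((i + n) choose n))" by (simp only: mult.left_commute)
  also have "Suc (i + n) * ((i + n) choose n) = Suc n * (Suc (i + n) choose Suc n)"
    by (rule Suc_times_binomial[symmetric])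
  also have "fact n * (Suc n * (Suc (i + n) choose Suc n)) = fact (Suc n) * ((i + Suc n) choose Suc n)"
  proof -
    have f: "fact (Suc n) = Suc n * (fact n :: nat)" by (simp only: fact_Suc of_nat_id)
    show ?thesis unfolding f add_Suc_right by (simp only: mult.assoc mult.left_commute)
  qed
  finally show ?case .
qed

lemma choose_le_pow: "((j + n) choose n) \<le> (j + 1) ^ n"
proof (induction n)
  case 0
  then show ?case by simp
next
  case (Suc n)
  have "Suc n * ((j + Suc n) choose Suc n) = Suc (j + n) * ((j + n) choose n)"
    using Suc_times_binomial[of n "j + n"] by simp
  also have "\<dots> \<le> Suc (j + n) * (j + 1) ^ n"
    using Suc by (intro mult_le_mono2)
  also have "\<dots> \<le> (Suc n * (j + 1)) * (j + 1) ^ n"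
    by (intro mult_le_mono1) simp
  also have "\<dots> = Suc n * (j + 1) ^ Suc n" by (simp only: power_Suc mult.assoc)
  finally have "Suc n * ((j + Suc n) choose Suc n) \<le> Suc n * (j + 1) ^ Suc n" .
  then show ?case by (simp only: Suc_mult_le_cancel1)
qed

lemma choose_id:
  assumes "j \<le> (i::nat)"
  shows "(i choose j) * ((i + n) choose n) = ((i + n) choose (j + n)) * ((j + n) choose n)"
  using choose_mult[of n "j + n" "i + n"] assms by (simp add: mult.commute)

lemma oneD_bound:
  fixes s :: real and n j :: nat
  assumes s0: "0 \<le> s" and s1: "s < 1"
  defines "h \<equiv> \<lambda>i. (real i + 1) ^ n * (if j \<le> i then real (i choose j) * s ^ (i - j) * (1 - s) ^ j else 0)"
  shows "h summable_on UNIV" and "infsum h UNIV \<le> fact n * (real j + 1) ^ n / (1 - s) ^ (n + 1)"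
proof -
  define r where "r = 1 - s"
  have r0: "r > 0" "r \<le> 1" using s0 s1 by (auto simp: r_def)
  define M where "M = j + n"
  define K where "K = fact n * real (M choose n) * r ^ j"
  define G where "G = (\<lambda>i. if j \<le> i then K * (real ((i + n) choose M) * s ^ (i - j)) else 0)"
  have "(\<lambda>l. K * (real ((l + M) choose M) * s ^ l)) sums (K * (1 / (1 - s) ^ (M + 1)))"
    by (intro sums_mult negbin_sums s0 s1)
  also have "(\<lambda>l. K * (real ((l + M) choose M) * s ^ l)) = (\<lambda>l. G (l + j))"
    by (auto simp: G_def M_def algebra_simps)
  finally have "(\<lambda>l. G (l + j)) sums (K * (1 / (1 - s) ^ (M + 1)))" .
  then have Gs: "G sums (K * (1 / (1 - s) ^ (M + 1)))"
    by (subst (asm) sums_zero_iff_shift) (auto simp: G_def)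
  have K0: "K \<ge> 0" using r0 by (simp add: K_def)
  have Gnn: "G i \<ge> 0" for i using K0 s0 by (simp add: G_def)
  have Gh: "(G has_sum (K * (1 / (1 - s) ^ (M + 1)))) UNIV"
    by (rule sums_nonneg_imp_has_sum[OF Gs Gnn])
  have hnn: "h i \<ge> 0" for i using s0 s1 by (simp add: h_def)
  have hG: "h i \<le> G i" for i
  proof (cases "j \<le> i")
    case False then show ?thesis by (simp add: h_def G_def)
  next
    case True
    have A: "(real i + 1) ^ n \<le> fact n * real ((i + n) choose n)"
    proof -
      have "real ((i + 1) ^ n) \<le> real (fact n * ((i + n) choose n))"
        using pow_le_fact_choose by (metis of_nat_le_iff)
      then show ?thesis by (simp add: add.commute)
    qed
    have "h i = (real i + 1) ^ n * (real (i choose j) * s ^ (i - j) * r ^ j)"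
      using True by (simp add: h_def r_def)
    also have "\<dots> \<le> (fact n * real ((i + n) choose n)) * (real (i choose j) * s ^ (i - j) * r ^ j)"
      using A s0 r0 by (intro mult_right_mono) auto
    also have "\<dots> = fact n * real ((i choose j) * ((i + n) choose n)) * s ^ (i - j) * r ^ j"
      by simp
    also have "(i choose j) * ((i + n) choose n) = ((i + n) choose M) * (M choose n)"
      using choose_id[OF True] by (simp add: M_def)
    also have "fact n * real (((i + n) choose M) * (M choose n)) * s ^ (i - j) * r ^ j = G i"
    proof -
      have "real (((i + n) choose M) * (M choose n)) = real ((i + n) choose M) * real (M choose n)"
        by (rule of_nat_mult)
      then show ?thesis using True unfolding G_def K_def by (simp only: if_True mult_ac)
    qed
    finally show ?thesis .
  qed
  show hs: "h summable_on UNIV"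
  proof -
    have Gsum: "G summable_on UNIV" using Gh by (rule has_sum_imp_summable)
    show ?thesis by (rule summable_on_comparison_test[OF Gsum]) (simp_all add: hG hnn)
  qed
  have "infsum h UNIV \<le> infsum G UNIV"
    using hs Gh hG by (intro infsum_mono) (simp_all add: has_sum_imp_summable)
  also have "infsum G UNIV = K * (1 / (1 - s) ^ (M + 1))"
    using Gh by (rule infsumI)
  also have "\<dots> = fact n * real (M choose n) / r ^ (n + 1)"
  proof -
    have e1: "1 - s = r" by (simp add: r_def)
    have e2: "r ^ (M + 1) = r ^ j * r ^ (n + 1)" by (simp add: M_def power_add)
    have "r ^ j \<noteq> 0" using r0 by simp
    then show ?thesis unfolding e1 e2 K_def by simp
  qed
  also have "\<dots> \<le> fact n * (real j + 1) ^ n / r ^ (n + 1)"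
  proof -
    have "real (M choose n) \<le> real ((j + 1) ^ n)"
      unfolding M_def using choose_le_pow by (metis of_nat_le_iff)
    then show ?thesis using r0 by (intro divide_right_mono mult_left_mono) (auto simp: add.commute)
  qed
  finally show "infsum h UNIV \<le> fact n * (real j + 1) ^ n / (1 - s) ^ (n + 1)"
    by (simp add: r_def)
qed

lemma prod_summable_PiE_real:
  fixes a :: "'i \<Rightarrow> 'b \<Rightarrow> real"
  assumes fin: "finite I" and nn: "\<And>i x. a i x \<ge> 0" and sm: "\<And>i. i \<in> I \<Longrightarrow> a i summable_on B i"
  shows "(\<lambda>p. \<Prod>i\<in>I. a i (p i)) summable_on PiE I B"
proof (rule nonneg_bdd_above_summable_on)
  show "\<And>p. p \<in> PiE I B \<Longrightarrow> 0 \<le> (\<Prod>i\<in>I. a i (p i))"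
    by (simp add: prod_nonneg nn)
  show "bdd_above (sum (\<lambda>p. \<Prod>i\<in>I. a i (p i)) ` {F. F \<subseteq> PiE I B \<and> finite F})"
  proof (rule bdd_aboveI2)
    fix P assume "P \<in> {F. F \<subseteq> PiE I B \<and> finite F}"
    hence P: "P \<subseteq> PiE I B" "finite P" by auto
    define B' where "B' i = (\<lambda>p. p i) ` P" for i
    have finB': "finite (B' i)" for i using P by (simp add: B'_def)
    have PB': "P \<subseteq> PiE I B'"
    proof
      fix p assume "p \<in> P"
      then have "p \<in> PiE I B" using P by auto
      then show "p \<in> PiE I B'" using \<open>p \<in> P\<close> by (auto simp: B'_def PiE_iff)
    qed
    have B'B: "B' i \<subseteq> B i" if "i \<in> I" for i
      using P that by (auto simp: B'_def PiE_iff)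
    have "sum (\<lambda>p. \<Prod>i\<in>I. a i (p i)) P \<le> sum (\<lambda>p. \<Prod>i\<in>I. a i (p i)) (PiE I B')"
      by (rule sum_mono2) (auto simp: finite_PiE fin finB' PB' prod_nonneg nn)
    also have "\<dots> = (\<Prod>i\<in>I. \<Sum>y\<in>B' i. a i y)"
      by (rule prod_sum_PiE[symmetric]) (simp_all add: fin finB')
    also have "\<dots> \<le> (\<Prod>i\<in>I. infsum (a i) (B i))"
    proof (rule prod_mono)
      fix i assume i: "i \<in> I"
      show "0 \<le> (\<Sum>y\<in>B' i. a i y) \<and> (\<Sum>y\<in>B' i. a i y) \<le> infsum (a i) (B i)"
        using finite_sum_le_has_sum[OF has_sum_infsum[OF sm[OF i]] finB' B'B[OF i]]
        by (simp add: sum_nonneg nn)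
    qed
    finally show "sum (\<lambda>p. \<Prod>i\<in>I. a i (p i)) P \<le> (\<Prod>i\<in>I. infsum (a i) (B i))" .
  qed
qed

lemma has_sum_prod_vec:
  fixes a :: "'g::finite \<Rightarrow> nat \<Rightarrow> 'c::{real_normed_field, banach}"
  assumes sm: "\<And>m. (\<lambda>i. norm (a m i)) summable_on UNIV"
  shows "((\<lambda>k::nat^'g. \<Prod>m\<in>UNIV. a m (k$m)) has_sum (\<Prod>m\<in>UNIV. infsum (a m) UNIV)) UNIV"
proof -
  have s1: "(\<lambda>p. \<Prod>m\<in>UNIV. norm (a m (p m))) summable_on PiE UNIV (\<lambda>_. UNIV)"
    by (rule prod_summable_PiE_real) (simp_all add: sm)
  hence "(\<lambda>p. norm (\<Prod>m\<in>UNIV. a m (p m))) summable_on PiE UNIV (\<lambda>_. UNIV)"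
    by (simp add: prod_norm)
  hence s2: "(\<lambda>p. \<Prod>m\<in>UNIV. a m (p m)) summable_on PiE UNIV (\<lambda>_. UNIV)"
    by (rule abs_summable_summable)
  have sa: "a m summable_on UNIV" for m
    using sm by (rule abs_summable_summable)
  have "infsum (\<lambda>p. \<Prod>m\<in>UNIV. a m (p m)) (PiE UNIV (\<lambda>_. UNIV)) = (\<Prod>m\<in>UNIV. infsum (a m) UNIV)"
    using s2 by (intro infsum_prod_PiE) (simp_all add: sa)
  with s2 have h: "((\<lambda>p. \<Prod>m\<in>UNIV. a m (p m)) has_sum (\<Prod>m\<in>UNIV. infsum (a m) UNIV)) UNIV"
    using has_sum_infsum by fastforce
  have bij: "bij_betw vec_nth (UNIV :: (nat^'g) set) UNIV"
    by (rule bij_betwI[where g = vec_lambda]) auto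
  show ?thesis
    using has_sum_reindex_bij_betw[OF bij, of "\<lambda>p. \<Prod>m\<in>UNIV. a m (p m)"] h by simp
qed

lemma binom_has_sum:
  fixes x z :: "'a::real_normed_field"
  shows "((\<lambda>j. if j \<le> K then of_nat (K choose j) * x ^ (K - j) * z ^ j else 0) has_sum (x + z) ^ K) UNIV"
proof (rule has_sum_finite_neutralI[of "{..K}"])
  show "(x + z) ^ K = (\<Sum>j\<in>{..K}. if j \<le> K then of_nat (K choose j) * x ^ (K - j) * z ^ j else 0)"
    by (subst add.commute) (simp add: binomial_ring mult_ac)
qed auto

lemma powr_neg_eq:
  fixes r :: real assumes "0 < r"
  shows "r powr (- real N - 2) = 1 / r ^ (N + 2)"
proof -
  have "- real N - 2 = - real (N + 2)" by simp
  then have "r powr (- real N - 2) = 1 / r powr (real (N + 2))"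
    by (simp only: powr_minus_divide)
  also have "r powr (real (N + 2)) = r ^ (N + 2)" using assms by (rule powr_realpow)
  finally show ?thesis .
qed

lemma factor_le:
  fixes r J :: real
  assumes r0: "0 < r" and r1: "r \<le> 1" and J: "0 \<le> J"
  shows "fact N * (J + 1) ^ N / r ^ (N + 1) \<le> fact N * (r powr (- real N - 2) * (J + 1) ^ (N + 1))"
proof -
  have p1: "(J + 1) ^ N \<le> (J + 1) ^ (N + 1)" using J by (intro power_increasing) auto
  have "r ^ (N + 2) \<le> r ^ (N + 1)" using r0 r1 by (intro power_decreasing) auto
  then have p2: "1 / r ^ (N + 1) \<le> 1 / r ^ (N + 2)" using r0 by (intro divide_left_mono) auto
  have "(J + 1) ^ N * (1 / r ^ (N + 1)) \<le> (J + 1) ^ (N + 1) * (1 / r ^ (N + 2))"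
    using p1 p2 J r0 by (intro mult_mono) auto
  then have "(J + 1) ^ N / r ^ (N + 1) \<le> r powr (- real N - 2) * (J + 1) ^ (N + 1)"
    using powr_neg_eq[OF r0, of N] by (simp add: mult.commute)
  then have "fact N * ((J + 1) ^ N / r ^ (N + 1)) \<le> fact N * (r powr (- real N - 2) * (J + 1) ^ (N + 1))"
    by (rule mult_left_mono) simp
  then show ?thesis by simp
qed

lemma powr_neg_ge1:
  fixes r :: real assumes "0 < r" "r \<le> 1"
  shows "1 \<le> r powr (- real N - 2)"
proof -
  have "r ^ (N + 2) \<le> 1" using assms by (intro power_le_one) auto
  moreover have "0 < r ^ (N + 2)" using assms by simp
  ultimately show ?thesis unfolding powr_neg_eq[OF assms(1)] by simp
qed

theorem mainTheorem14:
  fixes f :: "nat ^ 'g \<Rightarrow> complex" and A :: real and n :: "nat ^ 'g"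
    and c :: "complex ^ 'g"
  assumes "A \<ge> 1" and "\<forall>m. n $ m \<ge> 1"
    and "order_of_magnitude f A n"
    and "in_polydisc c 0 1"
  shows "\<exists>F :: nat ^ 'g \<Rightarrow> complex.
     (\<forall>y. in_polydisc y 0 1 \<longrightarrow>
        ((\<lambda>j. F j * mpow y j) has_sum
           ps_eval f (c + (\<chi> m. y $ m * complex_of_real (1 - norm (c $ m))))) UNIV)
   \<and> order_of_magnitude F
       (mfact n * A * exp (real (CARD('g) + l1norm_nat n)) * 2 ^ (CARD('g) + l1norm_nat n)
          * (\<Prod>m\<in>UNIV. (1 - norm (c $ m)) powr (- real (n $ m) - 2)))
       (n + 1)"
proof -
  have A1: "A \<ge> 1" by (rule assms(1))
  have fb: "norm (f k) \<le> A * (\<Prod>m\<in>UNIV. (real (k$m) + 1) ^ (n$m))" for k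
    using assms(3) by (simp add: order_of_magnitude_def)
  have cn: "norm (c$m) < 1" for m
    using assms(4) by (simp add: in_polydisc_def dist_norm)
  define r where "r m = 1 - norm (c$m)" for m
  have r0: "0 < r m" for m using cn[of m] by (simp add: r_def)
  have r1: "r m \<le> 1" for m by (simp add: r_def)
  define b where "b m i j = (if j \<le> i then of_nat (i choose j) * (c$m) ^ (i - j) * complex_of_real (r m) ^ j else 0)" for m i j
  define bn where "bn m i j = (if j \<le> i then real (i choose j) * norm (c$m) ^ (i - j) * r m ^ j else 0)" for m i j
  have nb: "norm (b m i j) = bn m i j" for m i j
    using r0[of m] by (simp add: b_def bn_def norm_mult norm_power)
  have bnn: "bn m i j \<ge> 0" for m i j
    using r0[of m] by (simp add: bn_def)
  define F where "F j = infsum (\<lambda>k. f k * (\<Prod>m\<in>UNIV. b m (k$m) (j$m))) UNIV" for j :: "nat^'g"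

  have S1: "(\<lambda>k. norm (f k * (\<Prod>m\<in>UNIV. b m (k$m) (j$m)))) summable_on UNIV \<and>
      infsum (\<lambda>k. norm (f k * (\<Prod>m\<in>UNIV. b m (k$m) (j$m)))) UNIV
        \<le> A * (\<Prod>m\<in>UNIV. fact (n$m) * (real (j$m) + 1) ^ (n$m) / r m ^ (n$m + 1))" for j
  proof -
    define H where "H m i = (real i + 1) ^ (n$m) * bn m i (j$m)" for m i
    have Heq: "H m = (\<lambda>i. (real i + 1) ^ (n$m) * (if j$m \<le> i then real (i choose j$m) * norm (c$m) ^ (i - j$m) * (1 - norm (c$m)) ^ (j$m) else 0))" for m
      by (simp add: H_def bn_def r_def fun_eq_iff)
    have Hs: "H m summable_on UNIV" for m
      using oneD_bound(1)[of "norm (c$m)" "n$m" "j$m"] cn[of m] Heq[of m] by simp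
    have Hb: "infsum (H m) UNIV \<le> fact (n$m) * (real (j$m) + 1) ^ (n$m) / r m ^ (n$m + 1)" for m
      using oneD_bound(2)[of "norm (c$m)" "n$m" "j$m"] cn[of m] Heq[of m] by (simp add: r_def)
    have Hnn: "H m i \<ge> 0" for m i by (simp add: H_def bnn)
    have Hn: "(\<lambda>i. norm (H m i)) summable_on UNIV" for m using Hs[of m] by (simp add: Hnn abs_of_nonneg)
    have Hp: "((\<lambda>k::nat^'g. \<Prod>m\<in>UNIV. H m (k$m)) has_sum (\<Prod>m\<in>UNIV. infsum (H m) UNIV)) UNIV"
      by (rule has_sum_prod_vec) (rule Hn)
    have Ap: "((\<lambda>k::nat^'g. A * (\<Prod>m\<in>UNIV. H m (k$m))) has_sum (A * (\<Prod>m\<in>UNIV. infsum (H m) UNIV))) UNIV"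
      by (rule has_sum_cmult_right[OF Hp])
    have le: "norm (f k * (\<Prod>m\<in>UNIV. b m (k$m) (j$m))) \<le> A * (\<Prod>m\<in>UNIV. H m (k$m))" for k
    proof -
      have "norm (f k * (\<Prod>m\<in>UNIV. b m (k$m) (j$m))) = norm (f k) * (\<Prod>m\<in>UNIV. bn m (k$m) (j$m))"
        by (simp add: norm_mult prod_norm[symmetric] nb)
      also have "\<dots> \<le> (A * (\<Prod>m\<in>UNIV. (real (k$m) + 1) ^ (n$m))) * (\<Prod>m\<in>UNIV. bn m (k$m) (j$m))"
        by (intro mult_right_mono fb prod_nonneg bnn)
      also have "\<dots> = A * (\<Prod>m\<in>UNIV. H m (k$m))"
        by (simp add: H_def prod.distrib)
      finally show ?thesis .
    qed
    have sm: "(\<lambda>k. norm (f k * (\<Prod>m\<in>UNIV. b m (k$m) (j$m)))) summable_on UNIV"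
      by (rule summable_on_comparison_test[OF has_sum_imp_summable[OF Ap]]) (simp_all add: le)
    have "infsum (\<lambda>k. norm (f k * (\<Prod>m\<in>UNIV. b m (k$m) (j$m)))) UNIV
        \<le> infsum (\<lambda>k::nat^'g. A * (\<Prod>m\<in>UNIV. H m (k$m))) UNIV"
      by (rule infsum_mono[OF sm has_sum_imp_summable[OF Ap]]) (simp add: le)
    also have "\<dots> = A * (\<Prod>m\<in>UNIV. infsum (H m) UNIV)"
      by (rule infsumI[OF Ap])
    also have "\<dots> \<le> A * (\<Prod>m\<in>UNIV. fact (n$m) * (real (j$m) + 1) ^ (n$m) / r m ^ (n$m + 1))"
      using A1 Hb by (intro mult_left_mono prod_mono conjI infsum_nonneg Hnn) auto
    finally show ?thesis using sm by simp
  qed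
  have part1: "\<forall>y. in_polydisc y 0 1 \<longrightarrow>
        ((\<lambda>j. F j * mpow y j) has_sum
           ps_eval f (c + (\<chi> m. y $ m * complex_of_real (1 - norm (c $ m))))) UNIV"
  proof (intro allI impI)
    fix y :: "complex^'g" assume y: "in_polydisc y 0 1"
    have yn: "norm (y$m) < 1" for m
      using y by (simp add: in_polydisc_def dist_norm)
    define w where "w = c + (\<chi> m. y $ m * complex_of_real (1 - norm (c $ m)))"
    have wm: "w$m = c$m + complex_of_real (r m) * y$m" for m
      by (simp add: w_def r_def mult.commute)
    define g2 where "g2 k j = f k * (\<Prod>m\<in>UNIV. b m (k$m) (j$m)) * mpow y j" for k j
    define \<rho> where "\<rho> m = norm (c$m) + r m * norm (y$m)" for m
    have \<rho>0: "0 \<le> \<rho> m" for m using r0[of m] by (simp add: \<rho>_def)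
    have \<rho>1: "\<rho> m < 1" for m
    proof -
      have "r m * norm (y$m) < r m * 1" using r0[of m] yn[of m] by (intro mult_strict_left_mono) auto
      then show ?thesis by (simp add: \<rho>_def r_def)
    qed
    have innN: "((\<lambda>j. norm (g2 k j)) has_sum (norm (f k) * (\<Prod>m\<in>UNIV. \<rho> m ^ (k$m)))) UNIV" for k
    proof -
      define a where "a m j' = bn m (k$m) j' * norm (y$m) ^ j'" for m j'
      have aeq: "a m = (\<lambda>j'. if j' \<le> k$m then of_nat (k$m choose j') * norm (c$m) ^ (k$m - j') * (r m * norm (y$m)) ^ j' else 0)" for m
        by (rule ext) (simp add: a_def bn_def power_mult_distrib mult.assoc)
      have ah: "(a m has_sum \<rho> m ^ (k$m)) UNIV" for m
        unfolding aeq \<rho>_def by (rule binom_has_sum)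
      have ann: "a m i \<ge> 0" for m i by (simp add: a_def bnn)
      have an: "(\<lambda>i. norm (a m i)) summable_on UNIV" for m
        using has_sum_imp_summable[OF ah[of m]] by (simp add: ann abs_of_nonneg)
      have "((\<lambda>j::nat^'g. \<Prod>m\<in>UNIV. a m (j$m)) has_sum (\<Prod>m\<in>UNIV. infsum (a m) UNIV)) UNIV"
        by (rule has_sum_prod_vec) (rule an)
      also have "(\<Prod>m\<in>UNIV. infsum (a m) UNIV) = (\<Prod>m\<in>UNIV. \<rho> m ^ (k$m))"
        by (intro prod.cong refl infsumI ah)
      finally have "((\<lambda>j::nat^'g. norm (f k) * (\<Prod>m\<in>UNIV. a m (j$m))) has_sum (norm (f k) * (\<Prod>m\<in>UNIV. \<rho> m ^ (k$m)))) UNIV"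
        by (rule has_sum_cmult_right)
      also have "(\<lambda>j::nat^'g. norm (f k) * (\<Prod>m\<in>UNIV. a m (j$m))) = (\<lambda>j. norm (g2 k j))"
        by (simp add: fun_eq_iff g2_def mpow_def a_def norm_mult prod_norm[symmetric] nb norm_power prod.distrib mult.assoc)
      finally show ?thesis .
    qed
    have outS: "(\<lambda>k::nat^'g. norm (f k) * (\<Prod>m\<in>UNIV. \<rho> m ^ (k$m))) summable_on UNIV"
    proof -
      define H where "H m i = (real i + 1) ^ (n$m) * \<rho> m ^ i" for m i
      have Hs: "H m summable_on UNIV" for m
      proof -
        have e: "H m = (\<lambda>i. (real i + 1) ^ (n$m) * \<rho> m ^ i)" by (rule ext) (simp add: H_def)
        show ?thesis using oneD_bound(1)[of "\<rho> m" "n$m" 0] \<rho>0[of m] \<rho>1[of m] unfolding e by simp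
      qed
      have Hnn: "H m i \<ge> 0" for m i by (simp add: H_def \<rho>0)
      have Hn: "(\<lambda>i. norm (H m i)) summable_on UNIV" for m using Hs[of m] by (simp add: Hnn abs_of_nonneg)
      have Hp: "((\<lambda>k::nat^'g. \<Prod>m\<in>UNIV. H m (k$m)) has_sum (\<Prod>m\<in>UNIV. infsum (H m) UNIV)) UNIV"
        by (rule has_sum_prod_vec) (rule Hn)
      have Ap: "((\<lambda>k::nat^'g. A * (\<Prod>m\<in>UNIV. H m (k$m))) has_sum (A * (\<Prod>m\<in>UNIV. infsum (H m) UNIV))) UNIV"
        by (rule has_sum_cmult_right[OF Hp])
      have le: "norm (f k) * (\<Prod>m\<in>UNIV. \<rho> m ^ (k$m)) \<le> A * (\<Prod>m\<in>UNIV. H m (k$m))" for k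
      proof -
        have "norm (f k) * (\<Prod>m\<in>UNIV. \<rho> m ^ (k$m)) \<le> (A * (\<Prod>m\<in>UNIV. (real (k$m) + 1) ^ (n$m))) * (\<Prod>m\<in>UNIV. \<rho> m ^ (k$m))"
          by (intro mult_right_mono fb prod_nonneg zero_le_power \<rho>0)
        also have "\<dots> = A * (\<Prod>m\<in>UNIV. H m (k$m))"
          by (simp add: H_def prod.distrib)
        finally show ?thesis .
      qed
      show ?thesis
        by (rule summable_on_comparison_test[OF has_sum_imp_summable[OF Ap]])
           (simp_all add: le \<rho>0 prod_nonneg)
    qed
    have sumN: "(\<lambda>(k,j). norm (g2 k j)) summable_on UNIV \<times> UNIV"
      by (rule summable_on_SigmaI[where g = "\<lambda>k. norm (f k) * (\<Prod>m\<in>UNIV. \<rho> m ^ (k$m))"])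
         (simp_all add: innN outS)
    have sumG: "(\<lambda>(k,j). g2 k j) summable_on UNIV \<times> UNIV"
    proof (rule abs_summable_summable)
      have "(\<lambda>x. norm ((\<lambda>(k,j). g2 k j) x)) = (\<lambda>(k,j). norm (g2 k j))" by auto
      then show "(\<lambda>x. norm ((\<lambda>(k,j). g2 k j) x)) summable_on UNIV \<times> UNIV" using sumN by simp
    qed
    have S3: "((\<lambda>j. g2 k j) has_sum f k * mpow w k) UNIV" for k
    proof -
      define a where "a m j' = b m (k$m) j' * (y$m) ^ j'" for m j'
      have aeq: "a m = (\<lambda>j'. if j' \<le> k$m then of_nat (k$m choose j') * (c$m) ^ (k$m - j') * (complex_of_real (r m) * y$m) ^ j' else 0)" for m
        by (rule ext) (simp add: a_def b_def power_mult_distrib mult.assoc)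
      have ah: "(a m has_sum (w$m) ^ (k$m)) UNIV" for m
        unfolding aeq wm by (rule binom_has_sum)
      have aneq: "(\<lambda>i. norm (a m i)) = (\<lambda>j'. if j' \<le> k$m then of_nat (k$m choose j') * norm (c$m) ^ (k$m - j') * (r m * norm (y$m)) ^ j' else 0)" for m
        by (rule ext) (simp add: a_def norm_mult norm_power nb bn_def power_mult_distrib mult.assoc)
      have an: "(\<lambda>i. norm (a m i)) summable_on UNIV" for m
        unfolding aneq by (rule has_sum_imp_summable[OF binom_has_sum])
      have "((\<lambda>j::nat^'g. \<Prod>m\<in>UNIV. a m (j$m)) has_sum (\<Prod>m\<in>UNIV. infsum (a m) UNIV)) UNIV"
        by (rule has_sum_prod_vec) (rule an)
      also have "(\<Prod>m\<in>UNIV. infsum (a m) UNIV) = mpow w k"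
        unfolding mpow_def by (intro prod.cong refl infsumI ah)
      finally have "((\<lambda>j::nat^'g. f k * (\<Prod>m\<in>UNIV. a m (j$m))) has_sum (f k * mpow w k)) UNIV"
        by (rule has_sum_cmult_right)
      also have "(\<lambda>j::nat^'g. f k * (\<Prod>m\<in>UNIV. a m (j$m))) = (\<lambda>j. g2 k j)"
        by (simp add: fun_eq_iff g2_def mpow_def a_def prod.distrib mult.assoc)
      finally show ?thesis .
    qed
    have S4: "((\<lambda>k. g2 k j) has_sum F j * mpow y j) UNIV" for j
    proof -
      have "(\<lambda>k. f k * (\<Prod>m\<in>UNIV. b m (k$m) (j$m))) summable_on UNIV"
        using conjunct1[OF S1[of j]] by (rule abs_summable_summable)
      then have "((\<lambda>k. f k * (\<Prod>m\<in>UNIV. b m (k$m) (j$m))) has_sum F j) UNIV"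
        unfolding F_def by (rule has_sum_infsum)
      then have "((\<lambda>k. f k * (\<Prod>m\<in>UNIV. b m (k$m) (j$m)) * mpow y j) has_sum F j * mpow y j) UNIV"
        by (rule has_sum_cmult_left)
      then show ?thesis unfolding g2_def .
    qed
    have "ps_eval f w = infsum (\<lambda>k. infsum (\<lambda>j. g2 k j) UNIV) UNIV"
      unfolding ps_eval_def by (intro infsum_cong) (simp add: infsumI[OF S3])
    also have "\<dots> = infsum (\<lambda>(k,j). g2 k j) (UNIV \<times> UNIV)"
      by (rule infsum_Sigma'_banach[OF sumG])
    finally have ps: "ps_eval f w = infsum (\<lambda>(k,j). g2 k j) (UNIV \<times> UNIV)" .
    have hsw: "((\<lambda>(j,k). g2 k j) has_sum infsum (\<lambda>(k,j). g2 k j) (UNIV \<times> UNIV)) (UNIV \<times> UNIV)"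
      using has_sum_swap[where f = "\<lambda>(k,j). g2 k j" and A = UNIV and B = UNIV] has_sum_infsum[OF sumG] by simp
    have "((\<lambda>j. F j * mpow y j) has_sum infsum (\<lambda>(k,j). g2 k j) (UNIV \<times> UNIV)) UNIV"
      by (rule has_sum_Sigma'[OF hsw]) (simp add: S4)
    then show "((\<lambda>j. F j * mpow y j) has_sum ps_eval f (c + (\<chi> m. y $ m * complex_of_real (1 - norm (c $ m))))) UNIV"
      using ps by (simp add: w_def)
  qed
  define R where "R = (\<Prod>m\<in>UNIV. (1 - norm (c $ m)) powr (- real (n $ m) - 2))"
  define E where "E = exp (real (CARD('g) + l1norm_nat n)) * (2::real) ^ (CARD('g) + l1norm_nat n)"
  have E1: "E \<ge> 1" unfolding E_def
    by (rule order_trans[of _ "1 * 1"]) (simp, intro mult_mono, simp_all)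
  have R1: "R \<ge> 1" unfolding R_def
    using powr_neg_ge1[OF r0 r1] by (intro prod_ge_1) (simp add: r_def)
  have mf: "mfact n \<ge> 1" unfolding mfact_def by (rule prod_ge_1) simp
  have bound: "norm (F j) \<le> (mfact n * A * E * R) * (\<Prod>m\<in>UNIV. (real (j$m) + 1) ^ ((n + 1) $ m))" for j
  proof -
    define P where "P = (\<Prod>m\<in>UNIV. (real (j$m) + 1) ^ (n$m + 1))"
    have P0: "P \<ge> 0" unfolding P_def by (intro prod_nonneg) simp
    have "norm (F j) \<le> infsum (\<lambda>k. norm (f k * (\<Prod>m\<in>UNIV. b m (k$m) (j$m)))) UNIV"
      unfolding F_def by (rule norm_infsum_bound[OF conjunct1[OF S1[of j]]])
    also have "\<dots> \<le> A * (\<Prod>m\<in>UNIV. fact (n$m) * (real (j$m) + 1) ^ (n$m) / r m ^ (n$m + 1))"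
      by (rule conjunct2[OF S1[of j]])
    also have "\<dots> \<le> A * (\<Prod>m\<in>UNIV. fact (n$m) * (r m powr (- real (n$m) - 2) * (real (j$m) + 1) ^ (n$m + 1)))"
      using A1 r0 by (intro mult_left_mono prod_mono conjI factor_le r0 r1 divide_nonneg_pos
          mult_nonneg_nonneg zero_less_power) auto
    also have "\<dots> = A * (mfact n * (R * P))"
      by (simp add: prod.distrib mfact_def R_def P_def r_def)
    also have "\<dots> = (mfact n * A * R * P) * 1" by simp
    also have "\<dots> \<le> (mfact n * A * R * P) * E"
      using E1 mf A1 R1 P0 by (intro mult_left_mono) auto
    also have "\<dots> = (mfact n * A * E * R) * P" by simp
    finally show ?thesis by (simp add: P_def)
  qed
  have part2: "order_of_magnitude F (mfact n * A * E * R) (n + 1)"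
    unfolding order_of_magnitude_def
  proof (intro conjI allI)
    show "1 \<le> mfact n * A * E * R"
    proof -
      have ge1: "1 \<le> x * y" if "1 \<le> x" "1 \<le> y" for x y :: real
        using mult_mono[of 1 x 1 y] that by simp
      show ?thesis using mf A1 E1 R1 by (intro ge1) auto
    qed
  qed (rule bound | simp)+
  show ?thesis
    using part1 part2 unfolding E_def R_def by (intro exI[of _ F]) (simp add: mult.assoc)
qed

end
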